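(* Let $\mathbf{M}=\langle M,+,\vee,\wedge,0,1,-1\rangle$ be a unital commutative distributive $\ell$-monoid. The following are equivalent: (1) $\mathbf{M}$ is cancellative, i.e. for all $x,y,z\in M$, $x+z=y+z$ implies $x=y$; (2) for all $x,y,z\in\{w\in M\mid 0\le w\le 1\}$, if $x+z=y+z$ then $x=y$; (3) for all $x,y,z\in\Gamma(\mathbf{M})$, if $x\oplus z=y\oplus z$ and $x\odot z=y\odot z$ then $x=y$.
   Context: A \emph{unital commutative distributive $\ell$-monoid} is an algebra $\langle M,+,\vee,\wedge,0,1,-1\rangle$ (arities $2,2,2,0,0,0$) such that: $\langle M,\vee,\wedge\rangle$ is a distributive lattice (with order $\le$); $\langle M,+,0\rangle$ is a commutative monoid; $+$ distributes over $\vee$ and $\wedge$; $-1+1=0$; $-1\le 0\le 1$; and for every $x\in M$ there is $n\in\mathbb{N}\setminus\{0\}$ with $(-1)+\dots+(-1)\le x\le 1+\dots+1$ ($n$ summands each). For such $\mathbf{M}$, $\Gamma(\mathbf{M})$ is the set $\{x\in M\mid 0\le x\le 1\}$ with $\vee,\wedge,0,1$ restricted and $x\oplus y:=(x+y)\wedge 1$, $x\odot y:=(x+y+(-1))\vee 0$. *)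

theory Defs
  imports Main
begin

text \<open>A unital commutative distributive l-monoid, given by a carrier set M and
operations add (+), jn (join), mt (meet), constants z (0), u (1), m (-1).
The lattice order is x \<le> y iff jn x y = y.\<close>

definition lle :: "('a \<Rightarrow> 'a \<Rightarrow> 'a) \<Rightarrow> 'a \<Rightarrow> 'a \<Rightarrow> bool" where
  "lle jn x y \<longleftrightarrow> jn x y = y"

definition nsum :: "('a \<Rightarrow> 'a \<Rightarrow> 'a) \<Rightarrow> 'a \<Rightarrow> 'a \<Rightarrow> nat \<Rightarrow> 'a" where
  "nsum add z a n = (add a ^^ n) z"

definition ucdlm ::
  "'a set \<Rightarrow> ('a \<Rightarrow> 'a \<Rightarrow> 'a) \<Rightarrow> ('a \<Rightarrow> 'a \<Rightarrow> 'a) \<Rightarrow> ('a \<Rightarrow> 'a \<Rightarrow> 'a)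
     \<Rightarrow> 'a \<Rightarrow> 'a \<Rightarrow> 'a \<Rightarrow> bool" where
  "ucdlm M add jn mt z u m \<longleftrightarrow>
     \<comment> \<open>closure\<close>
     (\<forall>x\<in>M. \<forall>y\<in>M. add x y \<in> M \<and> jn x y \<in> M \<and> mt x y \<in> M) \<and> z \<in> M \<and> u \<in> M \<and> m \<in> M \<and>
     \<comment> \<open>distributive lattice\<close>
     (\<forall>x\<in>M. \<forall>y\<in>M. jn x y = jn y x \<and> mt x y = mt y x) \<and>
     (\<forall>x\<in>M. \<forall>y\<in>M. \<forall>w\<in>M. jn (jn x y) w = jn x (jn y w) \<and> mt (mt x y) w = mt x (mt y w)) \<and>
     (\<forall>x\<in>M. \<forall>y\<in>M. jn x (mt x y) = x \<and> mt x (jn x y) = x) \<and>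
     (\<forall>x\<in>M. \<forall>y\<in>M. \<forall>w\<in>M. mt x (jn y w) = jn (mt x y) (mt x w)) \<and>
     \<comment> \<open>commutative monoid\<close>
     (\<forall>x\<in>M. \<forall>y\<in>M. add x y = add y x) \<and>
     (\<forall>x\<in>M. \<forall>y\<in>M. \<forall>w\<in>M. add (add x y) w = add x (add y w)) \<and>
     (\<forall>x\<in>M. add x z = x) \<and>
     \<comment> \<open>+ distributes over join and meet\<close>
     (\<forall>x\<in>M. \<forall>y\<in>M. \<forall>w\<in>M. add x (jn y w) = jn (add x y) (add x w) \<and>
                            add x (mt y w) = mt (add x y) (add x w)) \<and>
     \<comment> \<open>-1 + 1 = 0, -1 \<le> 0 \<le> 1\<close>
     add m u = z \<and> lle jn m z \<and> lle jn z u \<and>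
     \<comment> \<open>strong unit\<close>
     (\<forall>x\<in>M. \<exists>n::nat. n \<noteq> 0 \<and> lle jn (nsum add z m n) x \<and> lle jn x (nsum add z u n))"

definition Gamma :: "'a set \<Rightarrow> ('a \<Rightarrow> 'a \<Rightarrow> 'a) \<Rightarrow> 'a \<Rightarrow> 'a \<Rightarrow> 'a set" where
  "Gamma M jn z u = {x \<in> M. lle jn z x \<and> lle jn x u}"

definition oplusG :: "('a \<Rightarrow> 'a \<Rightarrow> 'a) \<Rightarrow> ('a \<Rightarrow> 'a \<Rightarrow> 'a) \<Rightarrow> 'a \<Rightarrow> 'a \<Rightarrow> 'a \<Rightarrow> 'a" where
  "oplusG add mt u x y = mt (add x y) u"

definition odotG :: "('a \<Rightarrow> 'a \<Rightarrow> 'a) \<Rightarrow> ('a \<Rightarrow> 'a \<Rightarrow> 'a) \<Rightarrow> 'a \<Rightarrow> 'a \<Rightarrow> 'a \<Rightarrow> 'a \<Rightarrow> 'a" where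
  "odotG add jn z m x y = jn (add (add x y) m) z"

end

theory Submission
  imports Defs
begin

locale UC =
  fixes M add jn mt z u m
  assumes ax: "ucdlm M add jn mt z u m"
begin

abbreviation le where "le x y \<equiv> lle jn x y"
abbreviation un where "un n \<equiv> nsum add z u n"
abbreviation mn where "mn n \<equiv> nsum add z m n"

lemma add_cl[simp]: "x \<in> M \<Longrightarrow> y \<in> M \<Longrightarrow> add x y \<in> M"
  using ax unfolding ucdlm_def by simp
lemma jn_cl[simp]: "x \<in> M \<Longrightarrow> y \<in> M \<Longrightarrow> jn x y \<in> M"
  using ax unfolding ucdlm_def by simp
lemma mt_cl[simp]: "x \<in> M \<Longrightarrow> y \<in> M \<Longrightarrow> mt x y \<in> M"
  using ax unfolding ucdlm_def by simp
lemma consts_cl[simp]: "z \<in> M" "u \<in> M" "m \<in> M"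
  using ax unfolding ucdlm_def by simp+

lemma jn_comm: "x \<in> M \<Longrightarrow> y \<in> M \<Longrightarrow> jn x y = jn y x"
  using ax unfolding ucdlm_def by simp
lemma mt_comm: "x \<in> M \<Longrightarrow> y \<in> M \<Longrightarrow> mt x y = mt y x"
  using ax unfolding ucdlm_def by simp
lemma jn_assoc: "x \<in> M \<Longrightarrow> y \<in> M \<Longrightarrow> w \<in> M \<Longrightarrow> jn (jn x y) w = jn x (jn y w)"
  using ax unfolding ucdlm_def by (smt (verit))
lemma mt_assoc: "x \<in> M \<Longrightarrow> y \<in> M \<Longrightarrow> w \<in> M \<Longrightarrow> mt (mt x y) w = mt x (mt y w)"
  using ax unfolding ucdlm_def by (smt (verit))
lemma absorb1: "x \<in> M \<Longrightarrow> y \<in> M \<Longrightarrow> jn x (mt x y) = x"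
  using ax unfolding ucdlm_def by simp
lemma absorb2: "x \<in> M \<Longrightarrow> y \<in> M \<Longrightarrow> mt x (jn x y) = x"
  using ax unfolding ucdlm_def by simp
lemma dist1: "x \<in> M \<Longrightarrow> y \<in> M \<Longrightarrow> w \<in> M \<Longrightarrow> mt x (jn y w) = jn (mt x y) (mt x w)"
  using ax unfolding ucdlm_def by simp
lemma add_comm: "x \<in> M \<Longrightarrow> y \<in> M \<Longrightarrow> add x y = add y x"
  using ax unfolding ucdlm_def by simp
lemma add_assoc: "x \<in> M \<Longrightarrow> y \<in> M \<Longrightarrow> w \<in> M \<Longrightarrow> add (add x y) w = add x (add y w)"
  using ax unfolding ucdlm_def by (smt (verit))
lemma add_zr[simp]: "x \<in> M \<Longrightarrow> add x z = x"
  using ax unfolding ucdlm_def by simp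
lemma add_zl[simp]: "x \<in> M \<Longrightarrow> add z x = x"
  using add_comm add_zr consts_cl by metis
lemma add_jn: "x \<in> M \<Longrightarrow> y \<in> M \<Longrightarrow> w \<in> M \<Longrightarrow> add x (jn y w) = jn (add x y) (add x w)"
  using ax unfolding ucdlm_def by simp
lemma add_mt: "x \<in> M \<Longrightarrow> y \<in> M \<Longrightarrow> w \<in> M \<Longrightarrow> add x (mt y w) = mt (add x y) (add x w)"
  using ax unfolding ucdlm_def by simp
lemma mu: "add m u = z"
  using ax unfolding ucdlm_def by simp
lemma m_le: "le m z" and z_le: "le z u"
  using ax unfolding ucdlm_def by simp+
lemma strong: "x \<in> M \<Longrightarrow> \<exists>n::nat. n \<noteq> 0 \<and> le (mn n) x \<and> le x (un n)"
  using ax unfolding ucdlm_def by simp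

lemma add_lcomm: "x \<in> M \<Longrightarrow> y \<in> M \<Longrightarrow> w \<in> M \<Longrightarrow> add x (add y w) = add y (add x w)"
  by (metis add_assoc add_comm)
lemmas add_ac = add_assoc add_comm add_lcomm

lemma um: "add u m = z" using mu add_comm consts_cl by metis

lemma jn_idem: "x \<in> M \<Longrightarrow> jn x x = x"
  by (metis absorb1 absorb2 jn_cl)
lemma le_refl: "x \<in> M \<Longrightarrow> le x x" unfolding lle_def by (rule jn_idem)
lemma le_antisym: "x \<in> M \<Longrightarrow> y \<in> M \<Longrightarrow> le x y \<Longrightarrow> le y x \<Longrightarrow> x = y"
  unfolding lle_def by (metis jn_comm)
lemma le_trans: "x \<in> M \<Longrightarrow> y \<in> M \<Longrightarrow> w \<in> M \<Longrightarrow> le x y \<Longrightarrow> le y w \<Longrightarrow> le x w"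
  unfolding lle_def by (metis jn_assoc)
lemma le_mt: "x \<in> M \<Longrightarrow> y \<in> M \<Longrightarrow> le x y \<longleftrightarrow> mt x y = x"
  unfolding lle_def by (metis absorb1 absorb2 jn_comm mt_comm)
lemma jn_upper1: "x \<in> M \<Longrightarrow> y \<in> M \<Longrightarrow> le x (jn x y)"
  unfolding lle_def by (metis jn_assoc jn_idem)
lemma jn_upper2: "x \<in> M \<Longrightarrow> y \<in> M \<Longrightarrow> le y (jn x y)"
  by (metis jn_comm jn_upper1)
lemma mt_lower1: "x \<in> M \<Longrightarrow> y \<in> M \<Longrightarrow> le (mt x y) x"
  by (metis le_mt mt_cl mt_assoc absorb2 jn_idem mt_comm)
lemma mt_lower2: "x \<in> M \<Longrightarrow> y \<in> M \<Longrightarrow> le (mt x y) y"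
  by (metis mt_comm mt_lower1)
lemma jn_least: "x \<in> M \<Longrightarrow> y \<in> M \<Longrightarrow> w \<in> M \<Longrightarrow> le x w \<Longrightarrow> le y w \<Longrightarrow> le (jn x y) w"
  unfolding lle_def by (metis jn_assoc)
lemma mt_greatest: "x \<in> M \<Longrightarrow> y \<in> M \<Longrightarrow> w \<in> M \<Longrightarrow> le w x \<Longrightarrow> le w y \<Longrightarrow> le w (mt x y)"
  by (metis le_mt mt_cl mt_assoc)

lemma dist2: "x \<in> M \<Longrightarrow> y \<in> M \<Longrightarrow> w \<in> M \<Longrightarrow> jn x (mt y w) = mt (jn x y) (jn x w)"
proof -
  assume M: "x \<in> M" "y \<in> M" "w \<in> M"
  have "mt (jn x y) (jn x w) = jn (mt (jn x y) x) (mt (jn x y) w)"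
    using M by (simp add: dist1)
  also have "mt (jn x y) x = x" using M by (metis absorb2 mt_comm jn_cl)
  also have "mt (jn x y) w = jn (mt w x) (mt w y)" using M by (metis dist1 mt_comm jn_cl)
  also have "jn x (jn (mt w x) (mt w y)) = jn (jn x (mt w x)) (mt w y)" using M by (simp add: jn_assoc)
  also have "jn x (mt w x) = x" using M by (metis absorb1 mt_comm)
  also have "mt w y = mt y w" using M by (simp add: mt_comm)
  finally show ?thesis by simp
qed

lemma latt_cancel: "x \<in> M \<Longrightarrow> y \<in> M \<Longrightarrow> c \<in> M \<Longrightarrow> mt x c = mt y c \<Longrightarrow> jn x c = jn y c \<Longrightarrow> x = y"
proof -
  assume M: "x \<in> M" "y \<in> M" "c \<in> M" and h: "mt x c = mt y c" "jn x c = jn y c"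
  have "x = mt x (jn x c)" using M by (simp add: absorb2)
  also have "\<dots> = mt x (jn y c)" using h by simp
  also have "\<dots> = jn (mt x y) (mt x c)" using M by (simp add: dist1)
  also have "\<dots> = jn (mt y x) (mt y c)" using M h by (simp add: mt_comm)
  also have "\<dots> = mt y (jn x c)" using M by (simp add: dist1)
  also have "\<dots> = y" using M h by (simp add: absorb2)
  finally show ?thesis .
qed

lemma add_mono: "a \<in> M \<Longrightarrow> b \<in> M \<Longrightarrow> c \<in> M \<Longrightarrow> le a b \<Longrightarrow> le (add c a) (add c b)"
  unfolding lle_def by (metis add_jn)
lemma add_mono2: "a \<in> M \<Longrightarrow> b \<in> M \<Longrightarrow> c \<in> M \<Longrightarrow> d \<in> M \<Longrightarrow> le a b \<Longrightarrow> le c d \<Longrightarrow> le (add a c) (add b d)"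
  by (metis add_mono add_comm add_cl le_trans)

lemma add_mt_jn: "a \<in> M \<Longrightarrow> b \<in> M \<Longrightarrow> add (mt a b) (jn a b) = add a b"
proof -
  assume M: "a \<in> M" "b \<in> M"
  define E where "E = add (mt a b) (jn a b)"
  have EM: "E \<in> M" using M E_def by simp
  have "E = jn (add (mt a b) a) (add (mt a b) b)" using M E_def by (simp add: add_jn)
  also have "add (mt a b) a = mt (add a a) (add a b)" using M by (metis add_comm add_mt mt_cl)
  also have "add (mt a b) b = mt (add a b) (add b b)" using M by (metis add_comm add_mt mt_cl)
  also have "jn (mt (add a a) (add a b)) (mt (add a b) (add b b)) = mt (add a b) (jn (add a a) (add b b))"
    using M by (metis dist1 mt_comm add_cl)
  finally have e1: "E = mt (add a b) (jn (add a a) (add b b))" .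
  have "E = add (jn a b) (mt a b)" using M E_def by (simp add: add_comm)
  also have "\<dots> = mt (add (jn a b) a) (add (jn a b) b)" using M by (simp add: add_mt)
  also have "add (jn a b) a = jn (add a a) (add a b)" using M by (metis add_comm add_jn jn_cl)
  also have "add (jn a b) b = jn (add a b) (add b b)" using M by (metis add_comm add_jn jn_cl)
  also have "mt (jn (add a a) (add a b)) (jn (add a b) (add b b)) = jn (add a b) (mt (add a a) (add b b))"
    using M by (metis dist2 jn_comm add_cl)
  finally have e2: "E = jn (add a b) (mt (add a a) (add b b))" .
  have "le E (add a b)" using e1 M by (simp add: mt_lower1)
  moreover have "le (add a b) E" using e2 M by (simp add: jn_upper1)
  ultimately show ?thesis using M EM E_def le_antisym by simp
qed

lemma u_cancel: "X \<in> M \<Longrightarrow> Y \<in> M \<Longrightarrow> add X u = add Y u \<Longrightarrow> X = Y"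
  by (metis add_assoc um add_zr consts_cl)

lemma u_jn: "s \<in> M \<Longrightarrow> add u (jn (add s m) z) = jn s u"
proof -
  assume M: "s \<in> M"
  have "add u (jn (add s m) z) = jn (add u (add s m)) (add u z)" using M by (simp add: add_jn)
  also have "add u (add s m) = s" using M by (metis add_lcomm um add_zr consts_cl)
  finally show ?thesis by simp
qed

lemma decomp: "w \<in> M \<Longrightarrow> add (mt w u) (jn (add w m) z) = w"
proof -
  assume M: "w \<in> M"
  have "add (add (mt w u) (jn (add w m) z)) u = add (mt w u) (add u (jn (add w m) z))"
    using M by (metis add_assoc add_comm consts_cl add_cl mt_cl jn_cl)
  also have "\<dots> = add (mt w u) (jn w u)" using M by (simp add: u_jn)
  also have "\<dots> = add w u" using M by (simp add: add_mt_jn)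
  finally show ?thesis using M u_cancel by simp
qed

lemma nsum_0[simp]: "nsum add z a 0 = z" by (simp add: nsum_def)
lemma nsum_Suc[simp]: "nsum add z a (Suc n) = add a (nsum add z a n)" by (simp add: nsum_def)
lemma un_cl[simp]: "un n \<in> M" by (induction n) auto
lemma mn_cl[simp]: "mn n \<in> M" by (induction n) auto

lemma un_mn: "add (un n) (mn n) = z"
proof (induction n)
  case 0 then show ?case by simp
next
  case (Suc n)
  have "add (un (Suc n)) (mn (Suc n)) = add (add u m) (add (un n) (mn n))"
    by (simp add: add_ac)
  then show ?case using Suc um by simp
qed

lemma un_step: "le (un n) (un (Suc n))"
  using add_mono[OF consts_cl(1) consts_cl(2) un_cl[of n] z_le] by (simp add: add_comm)
lemma mn_step: "le (mn (Suc n)) (mn n)"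
  using add_mono[OF consts_cl(3) consts_cl(1) mn_cl[of n] m_le] by (simp add: add_comm)
lemma un_mono: "n \<le> k \<Longrightarrow> le (un n) (un k)"
proof (induction k rule: dec_induct)
  case base then show ?case by (simp add: le_refl)
next
  case (step k) then show ?case using un_step le_trans un_cl by blast
qed
lemma mn_mono: "n \<le> k \<Longrightarrow> le (mn k) (mn n)"
proof (induction k rule: dec_induct)
  case base then show ?case by (simp add: le_refl)
next
  case (step k) then show ?case using mn_step le_trans mn_cl by blast
qed
lemma unSm: "add (un (Suc k)) m = un k"
proof -
  have "add (un (Suc k)) m = add u (add (un k) m)" by (simp add: add_assoc)
  also have "\<dots> = add (un k) (add u m)" by (rule add_lcomm) simp_all
  finally show ?thesis by (simp add: um)
qed

lemma z_le_un: "le z (un n)"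
  using un_mono[of 0 n] by simp


lemma Gamma_iff: "x \<in> Gamma M jn z u \<longleftrightarrow> x \<in> M \<and> le z x \<and> le x u"
  by (simp add: Gamma_def)

lemma canC:
  assumes H: "\<forall>x\<in>Gamma M jn z u. \<forall>y\<in>Gamma M jn z u. \<forall>w\<in>Gamma M jn z u. add x w = add y w \<longrightarrow> x = y"
  shows "\<forall>x y w. x \<in> M \<longrightarrow> y \<in> M \<longrightarrow> le z x \<longrightarrow> le z y \<longrightarrow> le x (un k) \<longrightarrow> le y (un k)
     \<longrightarrow> w \<in> Gamma M jn z u \<longrightarrow> add x w = add y w \<longrightarrow> x = y"
proof (induction k)
  case 0
  show ?case
  proof (intro allI impI)
    fix x y w assume "x \<in> M" "y \<in> M" "le z x" "le z y" "le x (un 0)" "le y (un 0)"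
    then have "x = z" "y = z" using le_antisym[of x z] le_antisym[of y z] consts_cl by simp_all
    then show "x = y" by simp
  qed
next
  case (Suc k)
  show ?case
  proof (intro allI impI)
    fix x y w
    assume x: "x \<in> M" and y: "y \<in> M" and zx: "le z x" and zy: "le z y"
      and xk: "le x (un (Suc k))" and yk: "le y (un (Suc k))" and w: "w \<in> Gamma M jn z u"
      and e: "add x w = add y w"
    have wM: "w \<in> M" using w Gamma_iff by blast
    have g1: "add (mt v u) w = mt (add v w) (add u w)" if "v \<in> M" for v
    proof -
      have "add (mt v u) w = add w (mt v u)" using add_comm[of "mt v u" w] that wM by simp
      also have "\<dots> = mt (add w v) (add w u)" using add_mt[of w v u] that wM by simp
      also have "\<dots> = mt (add v w) (add u w)" using add_comm[of w v] add_comm[of w u] that wM by simp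
      finally show ?thesis .
    qed
    have G1: "mt v u \<in> Gamma M jn z u" if "v \<in> M" "le z v" for v
      unfolding Gamma_iff using that mt_lower2[of v u] mt_greatest[of v u z] z_le by simp
    have e1: "mt x u = mt y u"
    proof -
      have "add (mt x u) w = add (mt y u) w" using g1[OF x] g1[OF y] e by simp
      then show ?thesis using H G1[OF x zx] G1[OF y zy] w by blast
    qed
    have g2: "add (jn (add v m) z) w = jn (add (add v w) m) w" if "v \<in> M" for v
    proof -
      have "add (jn (add v m) z) w = add w (jn (add v m) z)" using that wM add_comm[of "jn (add v m) z" w] by simp
      also have "\<dots> = jn (add w (add v m)) (add w z)" using that wM add_jn[of w "add v m" z] by simp
      also have "add w (add v m) = add (add v w) m" using that wM add_lcomm[of w v m] add_assoc[of v w m] by simp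
      finally show ?thesis using wM by simp
    qed
    have B2: "le z (jn (add v m) z) \<and> le (jn (add v m) z) (un k)" if "v \<in> M" "le v (un (Suc k))" for v
    proof -
      have "le (add m v) (add m (un (Suc k)))"
        using that add_mono[of v "un (Suc k)" m] by simp
      then have "le (add v m) (add (un (Suc k)) m)"
        using that add_comm[of m v] add_comm[of m "un (Suc k)"] by simp
      moreover have "add (un (Suc k)) m = un k" by (rule unSm)
      ultimately have "le (add v m) (un k)" by simp
      then show ?thesis using that jn_upper2[of "add v m" z] jn_least[of "add v m" z "un k"] z_le_un[of k] by simp
    qed
    have e2: "jn (add x m) z = jn (add y m) z"
    proof -
      have "add (jn (add x m) z) w = add (jn (add y m) z) w" using g2[OF x] g2[OF y] e by simp
      moreover have "jn (add x m) z \<in> M" "jn (add y m) z \<in> M" using x y by simp_all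
      ultimately show ?thesis using Suc.IH B2[OF x xk] B2[OF y yk] w by blast
    qed
    have "x = add (mt x u) (jn (add x m) z)" using decomp[OF x] by simp
    also have "\<dots> = add (mt y u) (jn (add y m) z)" using e1 e2 by simp
    also have "\<dots> = y" using decomp[OF y] by simp
    finally show "x = y" .
  qed
qed

lemma canC':
  assumes H: "\<forall>x\<in>Gamma M jn z u. \<forall>y\<in>Gamma M jn z u. \<forall>w\<in>Gamma M jn z u. add x w = add y w \<longrightarrow> x = y"
    and x: "x \<in> M" and y: "y \<in> M" and zx: "le z x" and zy: "le z y" and w: "w \<in> Gamma M jn z u"
    and e: "add x w = add y w"
  shows "x = y"
proof -
  obtain a where a: "le x (un a)" using strong[OF x] by blast
  obtain b where b: "le y (un b)" using strong[OF y] by blast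
  have 1: "le x (un (max a b))" using le_trans[OF x un_cl un_cl a un_mono[of a "max a b"]] by simp
  have 2: "le y (un (max a b))" using le_trans[OF y un_cl un_cl b un_mono[of b "max a b"]] by simp
  show ?thesis using canC[OF H, of "max a b", rule_format, OF x y zx zy 1 2 w e] .
qed

lemma canD:
  assumes H: "\<forall>x\<in>Gamma M jn z u. \<forall>y\<in>Gamma M jn z u. \<forall>w\<in>Gamma M jn z u. add x w = add y w \<longrightarrow> x = y"
  shows "\<forall>w x y. w \<in> M \<longrightarrow> le z w \<longrightarrow> le w (un j) \<longrightarrow> x \<in> M \<longrightarrow> y \<in> M \<longrightarrow> le z x \<longrightarrow> le z y
     \<longrightarrow> add x w = add y w \<longrightarrow> x = y"
proof (induction j)
  case 0
  show ?case
  proof (intro allI impI)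
    fix w x y assume "w \<in> M" "le z w" "le w (un 0)" "x \<in> M" "y \<in> M" "le z x" "le z y" "add x w = add y w"
    then have "w = z" using le_antisym[of w z] by simp
    then show "x = y" using \<open>add x w = add y w\<close> \<open>x \<in> M\<close> \<open>y \<in> M\<close> by simp
  qed
next
  case (Suc j)
  show ?case
  proof (intro allI impI)
    fix w x y
    assume w: "w \<in> M" and zw: "le z w" and wj: "le w (un (Suc j))" and x: "x \<in> M" and y: "y \<in> M"
      and zx: "le z x" and zy: "le z y" and e: "add x w = add y w"
    define w1 where "w1 = mt w u"
    define w2 where "w2 = jn (add w m) z"
    have w1M: "w1 \<in> M" and w2M: "w2 \<in> M" using w w1_def w2_def by simp_all
    have G1: "w1 \<in> Gamma M jn z u"
      unfolding Gamma_iff w1_def using w zw mt_lower2[of w u] mt_greatest[of w u z] z_le by simp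
    have B2: "le z w2 \<and> le w2 (un j)"
    proof -
      have "le (add m w) (add m (un (Suc j)))"
        using w wj add_mono[of w "un (Suc j)" m] by simp
      then have "le (add w m) (add (un (Suc j)) m)"
        using w add_comm[of m w] add_comm[of m "un (Suc j)"] by simp
      moreover have "add (un (Suc j)) m = un j" by (rule unSm)
      ultimately have "le (add w m) (un j)" by simp
      then show ?thesis unfolding w2_def using w jn_upper2[of "add w m" z] jn_least[of "add w m" z "un j"] z_le_un[of j] by simp
    qed
    have dec: "add v w = add (add v w2) w1" if "v \<in> M" for v
    proof -
      have "add v w = add v (add w1 w2)" using decomp[OF w] w1_def w2_def by simp
      also have "\<dots> = add v (add w2 w1)" using w1M w2M add_comm[of w1 w2] by simp
      also have "\<dots> = add (add v w2) w1" using that w1M w2M add_assoc[of v w2 w1] by simp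
      finally show ?thesis .
    qed
    have pos: "le z (add v w2)" if "v \<in> M" "le z v" for v
      using add_mono2[OF consts_cl(1) that(1) consts_cl(1) w2M that(2)] B2 by simp
    have "add (add x w2) w1 = add (add y w2) w1" using dec[OF x] dec[OF y] e by simp
    then have "add x w2 = add y w2"
      using canC'[OF H _ _ pos[OF x zx] pos[OF y zy] G1] x y w2M by simp
    then show "x = y" using Suc.IH[rule_format, OF w2M _ _ x y zx zy] B2 by blast
  qed
qed

lemma canAll:
  assumes H: "\<forall>x\<in>Gamma M jn z u. \<forall>y\<in>Gamma M jn z u. \<forall>w\<in>Gamma M jn z u. add x w = add y w \<longrightarrow> x = y"
    and x: "x \<in> M" and y: "y \<in> M" and w: "w \<in> M" and e: "add x w = add y w"
  shows "x = y"
proof -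
  obtain a where a: "le (mn a) x" using strong[OF x] by blast
  obtain b where b: "le (mn b) y" using strong[OF y] by blast
  obtain c where c: "le (mn c) w" using strong[OF w] by blast
  define N where "N = a + b + c"
  have lo: "le (mn N) v" if "v \<in> M" "le (mn k) v" "k \<le> N" for v k
    using le_trans[OF mn_cl mn_cl that(1) mn_mono[OF that(3)] that(2)] .
  have pos: "le z (add v (un N))" if "v \<in> M" "le (mn N) v" for v
  proof -
    have "le (add (un N) (mn N)) (add (un N) v)" using that add_mono[of "mn N" v "un N"] by simp
    then have "le z (add (un N) v)" by (simp add: un_mn)
    then show ?thesis using that by (simp add: add_comm[of v])
  qed
  have px: "le z (add x (un N))" using pos[OF x lo[OF x a]] N_def by simp
  have py: "le z (add y (un N))" using pos[OF y lo[OF y b]] N_def by simp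
  have pw: "le z (add w (un N))" using pos[OF w lo[OF w c]] N_def by simp
  obtain j where j: "le (add w (un N)) (un j)" using strong[of "add w (un N)"] w by auto
  have eq: "add (add v (un N)) (add w (un N)) = add (add v w) (add (un N) (un N))" if "v \<in> M" for v
  proof -
    have "add (add v (un N)) (add w (un N)) = add v (add (un N) (add w (un N)))" using that w add_assoc[of v "un N" "add w (un N)"] by simp
    also have "add (un N) (add w (un N)) = add w (add (un N) (un N))" by (rule add_lcomm) (simp_all add: w)
    also have "add v (add w (add (un N) (un N))) = add (add v w) (add (un N) (un N))" using that w add_assoc[of v w "add (un N) (un N)"] by simp
    finally show ?thesis .
  qed
  have "add (add x (un N)) (add w (un N)) = add (add y (un N)) (add w (un N))"
    using eq[OF x] eq[OF y] e by simp
  then have "add x (un N) = add y (un N)"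
    using canD[OF H, of j, rule_format, of "add w (un N)" "add x (un N)" "add y (un N)"]
      w x y j px py pw by simp
  then have "add (add x (un N)) (mn N) = add (add y (un N)) (mn N)" by simp
  then show ?thesis using x y add_assoc[of x "un N" "mn N"] add_assoc[of y "un N" "mn N"] un_mn[of N] by simp
qed

lemma part2:
  "(\<forall>x\<in>Gamma M jn z u. \<forall>y\<in>Gamma M jn z u. \<forall>w\<in>Gamma M jn z u. add x w = add y w \<longrightarrow> x = y)
   \<longleftrightarrow> (\<forall>x\<in>Gamma M jn z u. \<forall>y\<in>Gamma M jn z u. \<forall>w\<in>Gamma M jn z u.
                  oplusG add mt u x w = oplusG add mt u y w \<and>
                  odotG add jn z m x w = odotG add jn z m y w \<longrightarrow> x = y)"
proof
  assume H: "\<forall>x\<in>Gamma M jn z u. \<forall>y\<in>Gamma M jn z u. \<forall>w\<in>Gamma M jn z u. add x w = add y w \<longrightarrow> x = y"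
  show "\<forall>x\<in>Gamma M jn z u. \<forall>y\<in>Gamma M jn z u. \<forall>w\<in>Gamma M jn z u.
                  oplusG add mt u x w = oplusG add mt u y w \<and>
                  odotG add jn z m x w = odotG add jn z m y w \<longrightarrow> x = y"
  proof (intro ballI impI)
    fix x y w assume x: "x \<in> Gamma M jn z u" and y: "y \<in> Gamma M jn z u" and w: "w \<in> Gamma M jn z u"
      and e: "oplusG add mt u x w = oplusG add mt u y w \<and> odotG add jn z m x w = odotG add jn z m y w"
    have M: "x \<in> M" "y \<in> M" "w \<in> M" using x y w Gamma_iff by auto
    have e1: "mt (add x w) u = mt (add y w) u" using e by (simp add: oplusG_def)
    have "jn (add (add x w) m) z = jn (add (add y w) m) z" using e by (simp add: odotG_def)
    then have "add u (jn (add (add x w) m) z) = add u (jn (add (add y w) m) z)" by simp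
    then have e2: "jn (add x w) u = jn (add y w) u" using M by (simp add: u_jn)
    have "add x w = add y w" using latt_cancel[OF _ _ _ e1 e2] M by simp
    then show "x = y" using H x y w by blast
  qed
next
  assume H: "\<forall>x\<in>Gamma M jn z u. \<forall>y\<in>Gamma M jn z u. \<forall>w\<in>Gamma M jn z u.
                  oplusG add mt u x w = oplusG add mt u y w \<and>
                  odotG add jn z m x w = odotG add jn z m y w \<longrightarrow> x = y"
  show "\<forall>x\<in>Gamma M jn z u. \<forall>y\<in>Gamma M jn z u. \<forall>w\<in>Gamma M jn z u. add x w = add y w \<longrightarrow> x = y"
  proof (intro ballI impI)
    fix x y w assume x: "x \<in> Gamma M jn z u" and y: "y \<in> Gamma M jn z u" and w: "w \<in> Gamma M jn z u"
      and e: "add x w = add y w"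
    have "oplusG add mt u x w = oplusG add mt u y w \<and> odotG add jn z m x w = odotG add jn z m y w"
      by (simp add: oplusG_def odotG_def e)
    then show "x = y" using H x y w by blast
  qed
qed

lemma part1:
  "(\<forall>x\<in>M. \<forall>y\<in>M. \<forall>w\<in>M. add x w = add y w \<longrightarrow> x = y)
   \<longleftrightarrow> (\<forall>x\<in>Gamma M jn z u. \<forall>y\<in>Gamma M jn z u. \<forall>w\<in>Gamma M jn z u. add x w = add y w \<longrightarrow> x = y)"
proof
  assume H1: "\<forall>x\<in>M. \<forall>y\<in>M. \<forall>w\<in>M. add x w = add y w \<longrightarrow> x = y"
  show "\<forall>x\<in>Gamma M jn z u. \<forall>y\<in>Gamma M jn z u. \<forall>w\<in>Gamma M jn z u. add x w = add y w \<longrightarrow> x = y"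
  proof (intro ballI impI)
    fix x y w assume "x \<in> Gamma M jn z u" "y \<in> Gamma M jn z u" "w \<in> Gamma M jn z u" "add x w = add y w"
    then show "x = y" using H1 Gamma_iff by blast
  qed
next
  assume H: "\<forall>x\<in>Gamma M jn z u. \<forall>y\<in>Gamma M jn z u. \<forall>w\<in>Gamma M jn z u. add x w = add y w \<longrightarrow> x = y"
  show "\<forall>x\<in>M. \<forall>y\<in>M. \<forall>w\<in>M. add x w = add y w \<longrightarrow> x = y"
    using canAll[OF H] by blast
qed

end


theorem mainTheorem2:
  assumes "ucdlm M add jn mt z u m"
  shows "((\<forall>x\<in>M. \<forall>y\<in>M. \<forall>w\<in>M. add x w = add y w \<longrightarrow> x = y)
           \<longleftrightarrow> (\<forall>x\<in>Gamma M jn z u. \<forall>y\<in>Gamma M jn z u. \<forall>w\<in>Gamma M jn z u.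
                  add x w = add y w \<longrightarrow> x = y))
       \<and> ((\<forall>x\<in>Gamma M jn z u. \<forall>y\<in>Gamma M jn z u. \<forall>w\<in>Gamma M jn z u.
                  add x w = add y w \<longrightarrow> x = y)
           \<longleftrightarrow> (\<forall>x\<in>Gamma M jn z u. \<forall>y\<in>Gamma M jn z u. \<forall>w\<in>Gamma M jn z u.
                  oplusG add mt u x w = oplusG add mt u y w \<and>
                  odotG add jn z m x w = odotG add jn z m y w \<longrightarrow> x = y))"
proof -
  interpret UC M add jn mt z u m by (rule UC.intro[OF assms])
  show ?thesis by (rule conjI[OF part1 part2])
qed

end
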